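(* (i) If $\theta\in\mathbb{K}_2$ and $\theta\cdot\zeta_l\neq0$ for some $l\in\Gamma_i^{r_1}$, then $\alpha_\theta>\alpha_i$, where $\alpha_\theta=\max_{j:\theta_j>0}\alpha_j$. (ii) For every $\theta\in\mathbb{K}_2$ with $\Gamma_\theta^+\cup\Gamma_\theta^-\ne\emptyset$, $\gamma_\theta:=\alpha_\theta-\max_{k\in\Gamma_\theta^+\cup\Gamma_\theta^-}\rho_k>r_1$. Consequently $r_2:=\min\{\gamma_\theta:\theta\in\mathbb{K}_2,\ \Gamma_\theta^+\cup\Gamma_\theta^-\neq\emptyset\}$ (when this set is nonempty) satisfies $r_2>r_1$.
   Context: Fix integers $s_0,r_0\ge1$, vectors $\nu_k,\nu'_k\in\mathbb{N}^{s_0}$ ($k=1,\dots,r_0$), $\zeta_k=\nu'_k-\nu_k$, $\alpha\in[0,\infty)^{s_0}$, $\beta\in\mathbb{R}^{r_0}$, $\rho_k=\beta_k+\nu_k\cdot\alpha$. For $\theta\in[0,\infty)^{s_0}$, $\Gamma_\theta^+=\{k:\theta\cdot\zeta_k>0\}$, $\Gamma_\theta^-=\{k:\theta\cdot\zeta_k<0\}$. Let $r_1=\min_i(\alpha_i-\max_{k:\zeta_{ik}\ne0}\rho_k)$ (assumed finite; a maximum over the empty set is $-\infty$) and $\Gamma_i^{r_1}=\{k:r_1+\rho_k=\alpha_i\}$. Let $S_1=\{i:\Gamma_i^{r_1}\ne\emptyset\}$, $\Pi_1$ the coordinate projection onto $\mathrm{span}\{e_i:i\in S_1\}$ ($(\Pi_1x)_i=x_i$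 for $i\in S_1$, $0$ otherwise), and $\mathbb{K}_2=\{\theta\in[0,\infty)^{s_0}:\theta\cdot\Pi_1\zeta_k=0\ \forall k\in\bigcup_i\Gamma_i^{r_1}\}$. *)

theory Defs
  imports Main "HOL.Real"
begin

text \<open>Species indices i range over a finite type 'i (s0 = CARD('i) >= 1),
reaction indices k over a finite type 'k (r0 = CARD('k) >= 1).
Vectors in R^{s0} are functions 'i => real.\<close>

definition dotp :: "('i::finite \<Rightarrow> real) \<Rightarrow> ('i \<Rightarrow> real) \<Rightarrow> real" where
  "dotp x y = (\<Sum>i\<in>UNIV. x i * y i)"

definition zeta :: "('k \<Rightarrow> 'i \<Rightarrow> nat) \<Rightarrow> ('k \<Rightarrow> 'i \<Rightarrow> nat) \<Rightarrow> 'k \<Rightarrow> 'i \<Rightarrow> real" where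
  "zeta nu nu' k i = real (nu' k i) - real (nu k i)"

definition rho :: "('k \<Rightarrow> 'i::finite \<Rightarrow> nat) \<Rightarrow> ('i \<Rightarrow> real) \<Rightarrow> ('k \<Rightarrow> real) \<Rightarrow> 'k \<Rightarrow> real" where
  "rho nu alpha beta k = beta k + dotp (\<lambda>i. real (nu k i)) alpha"

definition Gplus :: "('k \<Rightarrow> 'i::finite \<Rightarrow> nat) \<Rightarrow> ('k \<Rightarrow> 'i \<Rightarrow> nat) \<Rightarrow> ('i \<Rightarrow> real) \<Rightarrow> 'k set" where
  "Gplus nu nu' \<theta> = {k. dotp \<theta> (zeta nu nu' k) > 0}"

definition Gminus :: "('k \<Rightarrow> 'i::finite \<Rightarrow> nat) \<Rightarrow> ('k \<Rightarrow> 'i \<Rightarrow> nat) \<Rightarrow> ('i \<Rightarrow> real) \<Rightarrow> 'k set" where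
  "Gminus nu nu' \<theta> = {k. dotp \<theta> (zeta nu nu' k) < 0}"

text \<open>r1 = min_i (alpha_i - max_{k: zeta_ik ~= 0} rho_k); indices i with no such k
contribute +infinity and are therefore omitted from the minimum.\<close>
definition r1 :: "('k::finite \<Rightarrow> 'i::finite \<Rightarrow> nat) \<Rightarrow> ('k \<Rightarrow> 'i \<Rightarrow> nat) \<Rightarrow> ('i \<Rightarrow> real) \<Rightarrow> ('k \<Rightarrow> real) \<Rightarrow> real" where
  "r1 nu nu' alpha beta =
     Min ((\<lambda>i. alpha i - Max (rho nu alpha beta ` {k. zeta nu nu' k i \<noteq> 0}))
          ` {i. \<exists>k. zeta nu nu' k i \<noteq> 0})"

definition Gamma_r1 :: "('k::finite \<Rightarrow> 'i::finite \<Rightarrow> nat) \<Rightarrow> ('k \<Rightarrow> 'i \<Rightarrow> nat) \<Rightarrow> ('i \<Rightarrow> real) \<Rightarrow> ('k \<Rightarrow> real) \<Rightarrow> 'i \<Rightarrow> 'k set" where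
  "Gamma_r1 nu nu' alpha beta i = {k. r1 nu nu' alpha beta + rho nu alpha beta k = alpha i}"

definition S1 :: "('k::finite \<Rightarrow> 'i::finite \<Rightarrow> nat) \<Rightarrow> ('k \<Rightarrow> 'i \<Rightarrow> nat) \<Rightarrow> ('i \<Rightarrow> real) \<Rightarrow> ('k \<Rightarrow> real) \<Rightarrow> 'i set" where
  "S1 nu nu' alpha beta = {i. Gamma_r1 nu nu' alpha beta i \<noteq> {}}"

definition Pi1 :: "('k::finite \<Rightarrow> 'i::finite \<Rightarrow> nat) \<Rightarrow> ('k \<Rightarrow> 'i \<Rightarrow> nat) \<Rightarrow> ('i \<Rightarrow> real) \<Rightarrow> ('k \<Rightarrow> real) \<Rightarrow> ('i \<Rightarrow> real) \<Rightarrow> 'i \<Rightarrow> real" where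
  "Pi1 nu nu' alpha beta x i = (if i \<in> S1 nu nu' alpha beta then x i else 0)"

definition K2 :: "('k::finite \<Rightarrow> 'i::finite \<Rightarrow> nat) \<Rightarrow> ('k \<Rightarrow> 'i \<Rightarrow> nat) \<Rightarrow> ('i \<Rightarrow> real) \<Rightarrow> ('k \<Rightarrow> real) \<Rightarrow> ('i \<Rightarrow> real) set" where
  "K2 nu nu' alpha beta =
     {\<theta>. (\<forall>i. \<theta> i \<ge> 0) \<and>
          (\<forall>k \<in> (\<Union>i. Gamma_r1 nu nu' alpha beta i).
              dotp \<theta> (Pi1 nu nu' alpha beta (zeta nu nu' k)) = 0)}"

definition alpha_theta :: "('i::finite \<Rightarrow> real) \<Rightarrow> ('i \<Rightarrow> real) \<Rightarrow> real" where
  "alpha_theta alpha \<theta> = Max (alpha ` {j. \<theta> j > 0})"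

definition gamma_theta :: "('k::finite \<Rightarrow> 'i::finite \<Rightarrow> nat) \<Rightarrow> ('k \<Rightarrow> 'i \<Rightarrow> nat) \<Rightarrow> ('i \<Rightarrow> real) \<Rightarrow> ('k \<Rightarrow> real) \<Rightarrow> ('i \<Rightarrow> real) \<Rightarrow> real" where
  "gamma_theta nu nu' alpha beta \<theta> =
     alpha_theta alpha \<theta> - Max (rho nu alpha beta ` (Gplus nu nu' \<theta> \<union> Gminus nu nu' \<theta>))"

end

theory Submission
  imports Defs
begin

lemma r1_le:
  fixes nu nu' :: "'k::finite \<Rightarrow> 'i::finite \<Rightarrow> nat"
  assumes "zeta nu nu' k j \<noteq> 0"
  shows "r1 nu nu' alpha beta + rho nu alpha beta k \<le> alpha j"
proof -
  let ?M = "Max (rho nu alpha beta ` {k. zeta nu nu' k j \<noteq> 0})"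
  have "rho nu alpha beta k \<le> ?M" using assms by (intro Max_ge) auto
  moreover have "r1 nu nu' alpha beta \<le> alpha j - ?M"
    unfolding r1_def using assms by (intro Min_le) auto
  ultimately show ?thesis by linarith
qed

lemma dotp_nz:
  assumes "dotp x y \<noteq> 0" shows "\<exists>i. x i \<noteq> 0 \<and> y i \<noteq> 0"
proof (rule ccontr)
  assume "\<not> ?thesis"
  hence "\<forall>i. x i * y i = 0" by auto
  hence "dotp x y = 0" unfolding dotp_def by (auto intro: sum.neutral)
  with assms show False by simp
qed

lemma alpha_theta_ge:
  fixes \<theta> :: "'i::finite \<Rightarrow> real"
  assumes "\<theta> j > 0" shows "alpha j \<le> alpha_theta alpha \<theta>"
  unfolding alpha_theta_def using assms by (intro Max_ge) auto

lemma part1: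
  fixes nu nu' :: "'k::finite \<Rightarrow> 'i::finite \<Rightarrow> nat"
  assumes th: "\<theta> \<in> K2 nu nu' alpha beta" and l: "l \<in> Gamma_r1 nu nu' alpha beta i"
    and nz: "dotp \<theta> (zeta nu nu' l) \<noteq> 0"
  shows "alpha_theta alpha \<theta> > alpha i"
proof -
  have pos: "\<forall>i. \<theta> i \<ge> 0" using th unfolding K2_def by auto
  have "dotp \<theta> (Pi1 nu nu' alpha beta (zeta nu nu' l)) = 0"
    using th l unfolding K2_def by auto
  hence "dotp \<theta> (\<lambda>j. if j \<in> S1 nu nu' alpha beta then 0 else zeta nu nu' l j) \<noteq> 0"
  proof -
    have e: "(\<Sum>j\<in>UNIV. \<theta> j * (if j \<in> S1 nu nu' alpha beta then 0 else zeta nu nu' l j))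
       = (\<Sum>j\<in>UNIV. \<theta> j * zeta nu nu' l j) - (\<Sum>j\<in>UNIV. \<theta> j * (if j \<in> S1 nu nu' alpha beta then zeta nu nu' l j else 0))"
      by (subst sum_subtractf[symmetric]) (rule sum.cong, auto)
    show ?thesis using nz \<open>dotp \<theta> (Pi1 nu nu' alpha beta (zeta nu nu' l)) = 0\<close>
      unfolding dotp_def Pi1_def e by simp
  qed
  then obtain j where j: "\<theta> j \<noteq> 0" "(if j \<in> S1 nu nu' alpha beta then 0 else zeta nu nu' l j) \<noteq> 0"
    using dotp_nz by blast
  hence jS: "j \<notin> S1 nu nu' alpha beta" and zj: "zeta nu nu' l j \<noteq> 0"
    by (auto split: if_splits)
  have tj: "\<theta> j > 0" using pos[rule_format, of j] j(1) by linarith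
  have "r1 nu nu' alpha beta + rho nu alpha beta l \<le> alpha j" using r1_le[OF zj] .
  moreover have "r1 nu nu' alpha beta + rho nu alpha beta l \<noteq> alpha j"
    using jS unfolding S1_def Gamma_r1_def by auto
  moreover have "r1 nu nu' alpha beta + rho nu alpha beta l = alpha i"
    using l unfolding Gamma_r1_def by auto
  ultimately have "alpha i < alpha j" by linarith
  with alpha_theta_ge[of \<theta> j alpha, OF tj] show ?thesis by linarith
qed

lemma part2k:
  fixes nu nu' :: "'k::finite \<Rightarrow> 'i::finite \<Rightarrow> nat"
  assumes th: "\<theta> \<in> K2 nu nu' alpha beta" and nz: "dotp \<theta> (zeta nu nu' k) \<noteq> 0"
  shows "alpha_theta alpha \<theta> - rho nu alpha beta k > r1 nu nu' alpha beta"
proof -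
  have pos: "\<forall>i. \<theta> i \<ge> 0" using th unfolding K2_def by auto
  obtain j where j: "\<theta> j \<noteq> 0" "zeta nu nu' k j \<noteq> 0" using dotp_nz[OF nz] by blast
  have tj: "\<theta> j > 0" using pos[rule_format, of j] j(1) by linarith
  have le: "r1 nu nu' alpha beta + rho nu alpha beta k \<le> alpha j" using r1_le[OF j(2)] .
  show ?thesis
  proof (cases "r1 nu nu' alpha beta + rho nu alpha beta k = alpha j")
    case True
    hence "k \<in> Gamma_r1 nu nu' alpha beta j" unfolding Gamma_r1_def by auto
    from part1[OF th this nz] True show ?thesis by linarith
  next
    case False
    with le alpha_theta_ge[of \<theta> j alpha, OF tj] show ?thesis by linarith
  qed
qed

lemma part2:
  fixes nu nu' :: "'k::finite \<Rightarrow> 'i::finite \<Rightarrow> nat"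
  assumes th: "\<theta> \<in> K2 nu nu' alpha beta" and ne: "Gplus nu nu' \<theta> \<union> Gminus nu nu' \<theta> \<noteq> {}"
  shows "gamma_theta nu nu' alpha beta \<theta> > r1 nu nu' alpha beta"
proof -
  let ?G = "Gplus nu nu' \<theta> \<union> Gminus nu nu' \<theta>"
  have "Max (rho nu alpha beta ` ?G) \<in> rho nu alpha beta ` ?G"
    using ne by (intro Max_in) auto
  then obtain k where k: "k \<in> ?G" "Max (rho nu alpha beta ` ?G) = rho nu alpha beta k" by auto
  have "dotp \<theta> (zeta nu nu' k) \<noteq> 0" using k(1) unfolding Gplus_def Gminus_def by auto
  from part2k[OF th this] k(2) show ?thesis unfolding gamma_theta_def by simp
qed

lemma part3:
  fixes nu nu' :: "'k::finite \<Rightarrow> 'i::finite \<Rightarrow> nat"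
    and alpha :: "'i \<Rightarrow> real" and beta :: "'k \<Rightarrow> real"
  shows "let S = {gamma_theta nu nu' alpha beta \<theta> | \<theta>.
                     \<theta> \<in> K2 nu nu' alpha beta \<and> Gplus nu nu' \<theta> \<union> Gminus nu nu' \<theta> \<noteq> {}}
          in S \<noteq> {} \<longrightarrow> finite S \<and> Min S > r1 nu nu' alpha beta"
proof -
  define S where "S = {gamma_theta nu nu' alpha beta \<theta> | \<theta>.
                     \<theta> \<in> K2 nu nu' alpha beta \<and> Gplus nu nu' \<theta> \<union> Gminus nu nu' \<theta> \<noteq> {}}"
  have sub: "S \<subseteq> (\<lambda>(j,k). alpha j - rho nu alpha beta k) ` UNIV"
  proof
    fix x assume "x \<in> S"
    then obtain \<theta> where x: "x = gamma_theta nu nu' alpha beta \<theta>"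
      and thK: "\<theta> \<in> K2 nu nu' alpha beta" and ne: "Gplus nu nu' \<theta> \<union> Gminus nu nu' \<theta> \<noteq> {}" unfolding S_def by blast
    let ?G = "Gplus nu nu' \<theta> \<union> Gminus nu nu' \<theta>"
    obtain k0 where "k0 \<in> ?G" using ne by auto
    hence "dotp \<theta> (zeta nu nu' k0) \<noteq> 0" unfolding Gplus_def Gminus_def by auto
    then obtain j0 where "\<theta> j0 \<noteq> 0" using dotp_nz by blast
    have "Max (rho nu alpha beta ` ?G) \<in> rho nu alpha beta ` ?G"
      using ne by (intro Max_in) auto
    then obtain k where k: "Max (rho nu alpha beta ` ?G) = rho nu alpha beta k" by auto
    have "{j. \<theta> j > 0} \<noteq> {} \<or> True" by simp
    show "x \<in> (\<lambda>(j,k). alpha j - rho nu alpha beta k) ` UNIV"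
    proof (cases "{j. \<theta> j > 0} = {}")
      case True
      hence "alpha_theta alpha \<theta> = Max {}" unfolding alpha_theta_def by simp
      show ?thesis
      proof -
        have "\<theta> j0 \<ge> 0" using thK unfolding K2_def by auto
        hence "\<theta> j0 > 0" using \<open>\<theta> j0 \<noteq> 0\<close> by linarith
        with True show ?thesis by auto
      qed
    next
      case False
      have "alpha_theta alpha \<theta> \<in> alpha ` {j. \<theta> j > 0}"
        unfolding alpha_theta_def using False by (intro Max_in) auto
      then obtain j where "alpha_theta alpha \<theta> = alpha j" by auto
      with k x show ?thesis unfolding gamma_theta_def by (auto intro!: image_eqI[of _ _ "(j,k)"])
    qed
  qed
  have main: "S \<noteq> {} \<longrightarrow> finite S \<and> Min S > r1 nu nu' alpha beta"
  proof
    assume ne: "S \<noteq> {}"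
    have fin: "finite S" by (rule finite_subset[OF sub]) simp
    have "Min S \<in> S" using fin ne by (rule Min_in)
    then obtain \<theta> where t: "Min S = gamma_theta nu nu' alpha beta \<theta>"
      "\<theta> \<in> K2 nu nu' alpha beta" "Gplus nu nu' \<theta> \<union> Gminus nu nu' \<theta> \<noteq> {}"
      unfolding S_def by blast
    have "Min S > r1 nu nu' alpha beta" unfolding t(1) by (rule part2[OF t(2,3)])
    with fin show "finite S \<and> Min S > r1 nu nu' alpha beta" by simp
  qed
  thus ?thesis unfolding S_def Let_def .
qed

theorem lemma4p4:
  fixes nu nu' :: "'k::finite \<Rightarrow> 'i::finite \<Rightarrow> nat"
    and alpha :: "'i \<Rightarrow> real" and beta :: "'k \<Rightarrow> real"
  assumes alpha_nonneg: "\<forall>i. alpha i \<ge> 0"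
    and r1_finite: "\<exists>i k. zeta nu nu' k i \<noteq> 0"
  shows "(\<forall>\<theta> i l. \<theta> \<in> K2 nu nu' alpha beta \<and> l \<in> Gamma_r1 nu nu' alpha beta i
              \<and> dotp \<theta> (zeta nu nu' l) \<noteq> 0
           \<longrightarrow> alpha_theta alpha \<theta> > alpha i)
       \<and> (\<forall>\<theta> \<in> K2 nu nu' alpha beta. Gplus nu nu' \<theta> \<union> Gminus nu nu' \<theta> \<noteq> {}
           \<longrightarrow> gamma_theta nu nu' alpha beta \<theta> > r1 nu nu' alpha beta)
       \<and> (let S = {gamma_theta nu nu' alpha beta \<theta> | \<theta>.
                     \<theta> \<in> K2 nu nu' alpha beta \<and> Gplus nu nu' \<theta> \<union> Gminus nu nu' \<theta> \<noteq> {}}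
          in S \<noteq> {} \<longrightarrow> finite S \<and> Min S > r1 nu nu' alpha beta)"
proof -
  have A: "\<forall>\<theta> i l. \<theta> \<in> K2 nu nu' alpha beta \<and> l \<in> Gamma_r1 nu nu' alpha beta i
              \<and> dotp \<theta> (zeta nu nu' l) \<noteq> 0
           \<longrightarrow> alpha_theta alpha \<theta> > alpha i" using part1 by blast
  have B: "\<forall>\<theta> \<in> K2 nu nu' alpha beta. Gplus nu nu' \<theta> \<union> Gminus nu nu' \<theta> \<noteq> {}
           \<longrightarrow> gamma_theta nu nu' alpha beta \<theta> > r1 nu nu' alpha beta" using part2 by blast
  from A B part3 show ?thesis by (rule conjI[OF _ conjI])
qed

end
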